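(* Let $K\ge 2$ and let $\{\ell_t^a\}_{t\ge1,\,a\in[K]}$ be an oblivious adversarial loss sequence with $\ell_t^a\in[0,1]$ and effective loss range $\varepsilon$. Then for every $T\ge 1$ the expected regret of SODA satisfies \[ \mathcal{R}_T \le 4\varepsilon\sqrt{(K-1)\ln K}\,\sqrt{T+(K-1)\sqrt{T}\left(2+\sqrt{\ln\!\big(\sqrt{T}(K-1)\big)/2}\right)} + 4(K-1)\ln K . \]
   Context: Setting (prediction with limited advice, one extra observation): there are $K$ arms, $[K]=\{1,\dots,K\}$, and losses $\ell_t^a\in[0,1]$ for rounds $t=1,2,\dots$. In each round $t$ the learner picks a primary arm $A_t\in[K]$, suffers and observes $\ell_t^{A_t}$, and additionally picks a secondary arm $B_t$ (chosen after $A_t$) and observes, but does not suffer, $\ell_t^{B_t}$. An oblivious adversary fixes all losses (deterministically) before the game starts. The effective loss range is the smallest $\varepsilon$ such that $|\ell_t^a-\ell_t^{a'}|\le\varepsilon$ for all $t$ and all $a,a'\in[K]$ (almost surely); $\varepsilon\le 1$. The expected regret is $\mathcal{R}_T=\mathbb{E}[\sum_{t=1}^T\ell_t^{A_t}]-\min_{a\in[K]}\mathbb{E}[\sum_{t=1}^T\ell_t^a]$, expectations over all randomness. SODA (Second Order Difference Adjustments): for each round $t$, draw $A_t\sim \mathbf p_t$, then draw $B_t$ uniformly from $[K]\setminus\{A_t\}$, observe $\ell_t^{A_t},\ell_t^{B_t}$, and set the loss difference estimators $\widetilde{\Delta\ell}_t^a=(K-1)\mathbb 1(B_t=a)(\ell_t^{B_t}-\ell_t^{A_t})$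 for all $a\in[K]$. Let $D_t(a)=\sum_{s=1}^t\widetilde{\Delta\ell}_s^a$, $S_t(a)=\sum_{s=1}^t(\widetilde{\Delta\ell}_s^a)^2$, with $D_0=S_0=0$. The learning rate is $\eta_t=\min\{\sqrt{\ln K/(\max_a S_{t-1}(a)+(K-1)^2)},\,1/(2(K-1))\}$ and \[p_t^a=\frac{\exp(-\eta_tD_{t-1}(a)-\eta_t^2S_{t-1}(a))}{\sum_{b=1}^K\exp(-\eta_tD_{t-1}(b)-\eta_t^2S_{t-1}(b))}\] (so $\mathbf p_1$ is uniform). *)

theory Defs
  imports "HOL-Probability.Probability"
begin

text \<open>Arms are 1..K; rounds are t = 1,2,...; losses are l t a.
  A history of length n is the list of pairs (A_s, B_s) for rounds s = 1..n,
  the entry for round s being at list index s - 1.\<close>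

definition soda_est :: "nat \<Rightarrow> (nat \<Rightarrow> nat \<Rightarrow> real) \<Rightarrow> nat \<Rightarrow> nat \<times> nat \<Rightarrow> nat \<Rightarrow> real" where
  "soda_est K l t ab a =
     (real K - 1) * (if snd ab = a then 1 else 0) * (l t (snd ab) - l t (fst ab))"

definition soda_D :: "nat \<Rightarrow> (nat \<Rightarrow> nat \<Rightarrow> real) \<Rightarrow> (nat \<times> nat) list \<Rightarrow> nat \<Rightarrow> real" where
  "soda_D K l h a = (\<Sum>s<length h. soda_est K l (Suc s) (h ! s) a)"

definition soda_S :: "nat \<Rightarrow> (nat \<Rightarrow> nat \<Rightarrow> real) \<Rightarrow> (nat \<times> nat) list \<Rightarrow> nat \<Rightarrow> real" where
  "soda_S K l h a = (\<Sum>s<length h. (soda_est K l (Suc s) (h ! s) a)\<^sup>2)"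

text \<open>Learning rate eta_t, computed from the history of rounds 1..t-1.\<close>
definition soda_eta :: "nat \<Rightarrow> (nat \<Rightarrow> nat \<Rightarrow> real) \<Rightarrow> (nat \<times> nat) list \<Rightarrow> real" where
  "soda_eta K l h =
     min (sqrt (ln (real K) / (Max ((\<lambda>a. soda_S K l h a) ` {1..K}) + (real K - 1)\<^sup>2)))
         (1 / (2 * (real K - 1)))"

definition soda_weight :: "nat \<Rightarrow> (nat \<Rightarrow> nat \<Rightarrow> real) \<Rightarrow> (nat \<times> nat) list \<Rightarrow> nat \<Rightarrow> real" where
  "soda_weight K l h a =
     exp (- soda_eta K l h * soda_D K l h a - (soda_eta K l h)\<^sup>2 * soda_S K l h a)"

definition soda_p :: "nat \<Rightarrow> (nat \<Rightarrow> nat \<Rightarrow> real) \<Rightarrow> (nat \<times> nat) list \<Rightarrow> nat pmf" where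
  "soda_p K l h = embed_pmf (\<lambda>a. if a \<in> {1..K}
       then soda_weight K l h a / (\<Sum>b\<in>{1..K}. soda_weight K l h b) else 0)"

primrec soda_traj :: "nat \<Rightarrow> (nat \<Rightarrow> nat \<Rightarrow> real) \<Rightarrow> nat \<Rightarrow> (nat \<times> nat) list pmf" where
  "soda_traj K l 0 = return_pmf []"
| "soda_traj K l (Suc n) =
     bind_pmf (soda_traj K l n) (\<lambda>h.
     bind_pmf (soda_p K l h) (\<lambda>A.
     bind_pmf (pmf_of_set ({1..K} - {A})) (\<lambda>B.
     return_pmf (h @ [(A, B)]))))"

definition soda_regret :: "nat \<Rightarrow> (nat \<Rightarrow> nat \<Rightarrow> real) \<Rightarrow> nat \<Rightarrow> real" where
  "soda_regret K l T =
     measure_pmf.expectation (soda_traj K l T) (\<lambda>h. \<Sum>t\<in>{1..T}. l t (fst (h ! (t - 1))))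
     - Min ((\<lambda>a. \<Sum>t\<in>{1..T}. l t a) ` {1..K})"

definition effective_range :: "nat \<Rightarrow> (nat \<Rightarrow> nat \<Rightarrow> real) \<Rightarrow> real \<Rightarrow> bool" where
  "effective_range K l eps \<longleftrightarrow>
     ((\<forall>t\<ge>1. \<forall>a\<in>{1..K}. \<forall>a'\<in>{1..K}. \<bar>l t a - l t a'\<bar> \<le> eps) \<and>
      (\<forall>e. (\<forall>t\<ge>1. \<forall>a\<in>{1..K}. \<forall>a'\<in>{1..K}. \<bar>l t a - l t a'\<bar> \<le> e) \<longrightarrow> eps \<le> e))"

end

theory Submission
  imports Defs
begin

locale soda =
  fixes K :: nat and l :: "nat \<Rightarrow> nat \<Rightarrow> real"
  assumes K2: "K \<ge> 2"
    and lrange: "\<forall>t\<ge>1. \<forall>a\<in>{1..K}. 0 \<le> l t a \<and> l t a \<le> 1"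
begin

definition W where "W h = (\<Sum>b\<in>{1..K}. soda_weight K l h b)"
definition pp where "pp h a = soda_weight K l h a / W h"
definition valid :: "(nat \<times> nat) list \<Rightarrow> bool" where
  "valid h \<longleftrightarrow> set h \<subseteq> {1..K} \<times> {1..K}"
definition SE :: "(nat \<times> nat) list \<Rightarrow> ((nat \<times> nat) list \<Rightarrow> real) \<Rightarrow> real" where
  "SE h f = (\<Sum>A\<in>{1..K}. pp h A * ((\<Sum>B\<in>{1..K} - {A}. f (h @ [(A, B)])) / (real K - 1)))"

lemma weight_pos: "soda_weight K l h a > 0"
  by (simp add: soda_weight_def)

lemma W_pos: "W h > 0"
  unfolding W_def using K2 by (intro sum_pos) (auto simp: weight_pos)

lemma pp_nonneg: "pp h a \<ge> 0"
  unfolding pp_def using W_pos[of h] weight_pos[of h a] by simp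

lemma pp_pos: "pp h a > 0"
  unfolding pp_def using W_pos[of h] weight_pos[of h a] by simp

lemma sum_pp: "(\<Sum>a\<in>{1..K}. pp h a) = 1"
  unfolding pp_def using W_pos[of h] by (simp add: sum_divide_distrib[symmetric] W_def)

lemma pmf_soda_p: "pmf (soda_p K l h) a = (if a \<in> {1..K} then pp h a else 0)"
proof -
  let ?f = "\<lambda>a. if a \<in> {1..K} then soda_weight K l h a / (\<Sum>b\<in>{1..K}. soda_weight K l h b) else 0"
  have nn: "\<forall>x. 0 \<le> ?f x" by (auto intro!: divide_nonneg_nonneg sum_nonneg less_imp_le[OF weight_pos])
  have "(\<integral>\<^sup>+x. ennreal (?f x) \<partial>count_space UNIV) = (\<Sum>x\<in>{1..K}. ennreal (?f x))"
    by (rule nn_integral_count_space') auto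
  also have "\<dots> = ennreal (\<Sum>x\<in>{1..K}. ?f x)" by (rule sum_ennreal) (use nn in blast)
  also have "(\<Sum>x\<in>{1..K}. ?f x) = (\<Sum>x\<in>{1..K}. pp h x)" by (auto simp: pp_def W_def)
  also have "\<dots> = 1" by (rule sum_pp)
  finally have int1: "(\<integral>\<^sup>+x. ennreal (?f x) \<partial>count_space UNIV) = 1" by simp
  show ?thesis unfolding soda_p_def
    using pmf_embed_pmf[OF nn[rule_format] int1] by (simp add: pp_def W_def)
qed

lemma set_soda_p: "set_pmf (soda_p K l h) = {1..K}"
proof -
  have "pp h x \<noteq> 0" for x by (metis pp_pos less_irrefl)
  thus ?thesis by (auto simp: set_pmf_eq pmf_soda_p)
qed

lemma card_minus: "A \<in> {1..K} \<Longrightarrow> card ({1..K} - {A}) = K - 1"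
  by (simp add: card_Diff_singleton)

lemma nonempty_minus: "A \<in> {1..K} \<Longrightarrow> {1..K} - {A} \<noteq> {}"
proof -
  assume A: "A \<in> {1..K}"
  have "(if A = 1 then 2 else 1) \<in> {1..K} - {A}" using A K2 by auto
  thus ?thesis by blast
qed

lemma set_unif: "A \<in> {1..K} \<Longrightarrow> set_pmf (pmf_of_set ({1..K} - {A})) = {1..K} - {A}"
  by (rule set_pmf_of_set[OF nonempty_minus]) auto

lemma traj_set: "set_pmf (soda_traj K l n) \<subseteq> {h. length h = n \<and> valid h}"
proof (induction n)
  case 0 then show ?case by (simp add: valid_def)
next
  case (Suc n)
  show ?case
  proof
    fix h' assume h'in: "h' \<in> set_pmf (soda_traj K l (Suc n))"
    obtain h A B where h: "h \<in> set_pmf (soda_traj K l n)" and A: "A \<in> {1..K}"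
      and B: "B \<in> set_pmf (pmf_of_set ({1..K} - {A}))" and h': "h' = h @ [(A, B)]"
      using h'in by (auto simp: set_soda_p)
    have B': "B \<in> {1..K}" using B set_unif[OF A] by auto
    show "h' \<in> {h. length h = Suc n \<and> valid h}"
      using Suc h A B' h' by (auto simp: valid_def)
  qed
qed

lemma finite_valid: "finite {h. length h = n \<and> valid h}"
proof -
  have "{h. length h = n \<and> valid h} \<subseteq> {xs. set xs \<subseteq> {1..K} \<times> {1..K} \<and> length xs = n}"
    by (auto simp: valid_def)
  moreover have "finite {xs. set xs \<subseteq> {1..K} \<times> {1..K} \<and> length xs = n}"
    by (intro finite_lists_length_eq) auto
  ultimately show ?thesis by (rule finite_subset)
qed

lemma finite_traj: "finite (set_pmf (soda_traj K l n))"
  using finite_subset[OF traj_set finite_valid] .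

lemma traj_valid: "h \<in> set_pmf (soda_traj K l n) \<Longrightarrow> length h = n \<and> valid h"
  using traj_set by blast

lemma E_step: "measure_pmf.expectation (soda_traj K l (Suc n)) f =
   measure_pmf.expectation (soda_traj K l n) (\<lambda>h. SE h f)"
proof -
  let ?P = "soda_traj K l n"
  let ?g = "\<lambda>h. bind_pmf (soda_p K l h) (\<lambda>A. bind_pmf (pmf_of_set ({1..K} - {A})) (\<lambda>B. return_pmf (h @ [(A, B)])))"
  have inner: "measure_pmf.expectation (?g h) f = SE h f" for h
  proof -
    have fin: "finite (set_pmf (bind_pmf (pmf_of_set ({1..K} - {A})) (\<lambda>B. return_pmf (h @ [(A, B)]))))" if "A \<in> {1..K}" for A
      using set_unif[OF that] by simp
    have "measure_pmf.expectation (?g h) f = (\<Sum>A\<in>{1..K}. pmf (soda_p K l h) A *\<^sub>R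
        measure_pmf.expectation (bind_pmf (pmf_of_set ({1..K} - {A})) (\<lambda>B. return_pmf (h @ [(A, B)]))) f)"
      by (rule pmf_expectation_bind) (use fin in \<open>auto simp: set_soda_p\<close>)
    also have "\<dots> = (\<Sum>A\<in>{1..K}. pp h A * ((\<Sum>B\<in>{1..K} - {A}. f (h @ [(A, B)])) / (real K - 1)))"
    proof (rule sum.cong[OF refl])
      fix A assume A: "A \<in> {1..K}"
      have "measure_pmf.expectation (bind_pmf (pmf_of_set ({1..K} - {A})) (\<lambda>B. return_pmf (h @ [(A, B)]))) f
          = (\<Sum>B\<in>{1..K} - {A}. f (h @ [(A, B)]) /\<^sub>R real (card ({1..K} - {A})))"
        by (subst pmf_expectation_bind_pmf_of_set) (use nonempty_minus[OF A] in auto)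
      also have "\<dots> = (\<Sum>B\<in>{1..K} - {A}. f (h @ [(A, B)])) / (real K - 1)"
        using card_minus[OF A] K2 by (simp add: sum_divide_distrib of_nat_diff divide_inverse_commute sum_distrib_left)
      finally show "pmf (soda_p K l h) A *\<^sub>R measure_pmf.expectation (bind_pmf (pmf_of_set ({1..K} - {A})) (\<lambda>B. return_pmf (h @ [(A, B)]))) f
          = pp h A * ((\<Sum>B\<in>{1..K} - {A}. f (h @ [(A, B)])) / (real K - 1))"
        using A by (simp add: pmf_soda_p)
    qed
    finally show ?thesis by (simp add: SE_def)
  qed
  have fin2: "finite (set_pmf (?g h))" for h
  proof (rule finite_subset)
    show "set_pmf (?g h) \<subseteq> (\<lambda>(A,B). h @ [(A,B)]) ` ({1..K} \<times> {1..K})"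
    proof
      fix h' assume "h' \<in> set_pmf (?g h)"
      then obtain A B where A: "A \<in> {1..K}" and B: "B \<in> set_pmf (pmf_of_set ({1..K} - {A}))" and h': "h' = h @ [(A, B)]"
        by (auto simp: set_soda_p)
      have B': "B \<in> {1..K}" using B set_unif[OF A] by auto
      show "h' \<in> (\<lambda>(A,B). h @ [(A,B)]) ` ({1..K} \<times> {1..K})" using A B' h' by auto
    qed
  qed auto
  have "measure_pmf.expectation (soda_traj K l (Suc n)) f = (\<Sum>h\<in>set_pmf ?P. pmf ?P h *\<^sub>R measure_pmf.expectation (?g h) f)"
    unfolding soda_traj.simps by (rule pmf_expectation_bind[OF finite_traj fin2 order_refl])
  also have "\<dots> = (\<Sum>h\<in>set_pmf ?P. pmf ?P h *\<^sub>R SE h f)" by (simp only: inner)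
  also have "\<dots> = measure_pmf.expectation ?P (\<lambda>h. SE h f)"
    by (rule integral_measure_pmf[OF finite_traj, symmetric]) auto
  finally show ?thesis .
qed

lemma mart_le:
  assumes "\<And>n h. length h = n \<Longrightarrow> valid h \<Longrightarrow> SE h (G (Suc n)) \<le> G n h"
  shows "measure_pmf.expectation (soda_traj K l T) (G T) \<le> G 0 []"
proof (induction T)
  case 0 then show ?case by simp
next
  case (Suc n)
  have "measure_pmf.expectation (soda_traj K l (Suc n)) (G (Suc n))
      = measure_pmf.expectation (soda_traj K l n) (\<lambda>h. SE h (G (Suc n)))" by (rule E_step)
  also have "\<dots> \<le> measure_pmf.expectation (soda_traj K l n) (G n)"
    by (intro integral_mono_AE integrable_measure_pmf_finite finite_traj)
       (auto simp: AE_measure_pmf_iff dest!: traj_valid intro: assms)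
  finally show ?case using Suc by simp
qed

lemma mart_eq:
  assumes "\<And>n h. length h = n \<Longrightarrow> valid h \<Longrightarrow> SE h (G (Suc n)) = G n h"
  shows "measure_pmf.expectation (soda_traj K l T) (G T) = G 0 []"
proof (induction T)
  case 0 then show ?case by simp
next
  case (Suc n)
  have "measure_pmf.expectation (soda_traj K l (Suc n)) (G (Suc n))
      = measure_pmf.expectation (soda_traj K l n) (\<lambda>h. SE h (G (Suc n)))" by (rule E_step)
  also have "\<dots> = measure_pmf.expectation (soda_traj K l n) (G n)"
    by (intro integral_cong_AE) (auto simp: AE_measure_pmf_iff dest!: traj_valid intro: assms)
  finally show ?case using Suc by simp
qed

end


context soda begin

definition M where "M h = Max ((\<lambda>a. soda_S K l h a) ` {1..K})"
definition Y where "Y h x = - (\<Sum>a\<in>{1..K}. pp h a * soda_est K l (Suc (length h)) x a)"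
definition Ysum where "Ysum h = (\<Sum>s<length h. Y (take s h) (h ! s))"
definition F where "F e h = (1 / e) * ln ((\<Sum>a\<in>{1..K}. exp (- e * soda_D K l h a - e\<^sup>2 * soda_S K l h a)) / real K)"

lemma K_real: "real K - 1 \<ge> 1" using K2 by simp
lemma lnK_pos: "ln (real K) > 0" using K2 by simp

lemma D_snoc: "soda_D K l (h @ [x]) a = soda_D K l h a + soda_est K l (Suc (length h)) x a"
  by (simp add: soda_D_def nth_append)

lemma S_snoc: "soda_S K l (h @ [x]) a = soda_S K l h a + (soda_est K l (Suc (length h)) x a)\<^sup>2"
  by (simp add: soda_S_def nth_append)

lemma D_Nil[simp]: "soda_D K l [] a = 0" by (simp add: soda_D_def)
lemma S_Nil[simp]: "soda_S K l [] a = 0" by (simp add: soda_S_def)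

lemma Ysum_snoc: "Ysum (h @ [x]) = Ysum h + Y h x"
  by (simp add: Ysum_def nth_append)

lemma est_bound:
  assumes "x \<in> {1..K} \<times> {1..K}" "t \<ge> 1"
  shows "\<bar>soda_est K l t x a\<bar> \<le> real K - 1"
proof -
  have "fst x \<in> {1..K}" "snd x \<in> {1..K}" using assms(1) by auto
  hence "0 \<le> l t (snd x) \<and> l t (snd x) \<le> 1" "0 \<le> l t (fst x) \<and> l t (fst x) \<le> 1"
    using lrange assms(2) by auto
  hence "\<bar>l t (snd x) - l t (fst x)\<bar> \<le> 1" by auto
  thus ?thesis using K_real unfolding soda_est_def
    by (auto simp: abs_mult mult_le_cancel_left1)
qed

lemma est_sq_bound:
  assumes "x \<in> {1..K} \<times> {1..K}" "t \<ge> 1"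
  shows "(soda_est K l t x a)\<^sup>2 \<le> (real K - 1)\<^sup>2"
  using est_bound[OF assms, of a] by (metis abs_ge_zero abs_le_square_iff abs_of_nonneg K_real order_trans zero_le_one)

lemma S_nonneg: "soda_S K l h a \<ge> 0" by (simp add: soda_S_def sum_nonneg)

lemma S_le_M: "a \<in> {1..K} \<Longrightarrow> soda_S K l h a \<le> M h"
  unfolding M_def by (rule Max_ge) auto

lemma M_nonneg: "M h \<ge> 0"
  using S_le_M[of 1 h] S_nonneg[of h 1] K2 by auto

lemma M_snoc_le:
  assumes "x \<in> {1..K} \<times> {1..K}"
  shows "M (h @ [x]) \<le> M h + (real K - 1)\<^sup>2"
  unfolding M_def[of "h @ [x]"]
proof (subst Max_le_iff, simp, use K2 in simp, clarify)
  fix a assume "a \<in> {1..K}"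
  show "soda_S K l (h @ [x]) a \<le> M h + (real K - 1)\<^sup>2"
    using S_le_M[OF \<open>a \<in> {1..K}\<close>, of h] est_sq_bound[OF assms, of "Suc (length h)" a]
    by (simp add: S_snoc)
qed

lemma M_snoc_ge: "M h \<le> M (h @ [x])"
  unfolding M_def[of h]
proof (subst Max_le_iff, simp, use K2 in simp, clarify)
  fix a assume "a \<in> {1..K}"
  show "soda_S K l h a \<le> M (h @ [x])"
    using S_le_M[OF \<open>a \<in> {1..K}\<close>, of "h @ [x]"] zero_le_power2[of "soda_est K l (Suc (length h)) x a"]
    by (simp add: S_snoc) (smt (verit) zero_le_power2)
qed

lemma eta_eq: "soda_eta K l h = min (sqrt (ln (real K) / (M h + (real K - 1)\<^sup>2))) (1 / (2 * (real K - 1)))"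
  by (simp add: soda_eta_def M_def)

lemma eta_pos: "soda_eta K l h > 0"
  unfolding eta_eq using lnK_pos K_real M_nonneg[of h]
  by (auto intro!: divide_pos_pos add_nonneg_pos)

lemma eta_le_c: "soda_eta K l h \<le> 1 / (2 * (real K - 1))"
  unfolding eta_eq by simp

lemma eta_sq: "(soda_eta K l h)\<^sup>2 * (M h + (real K - 1)\<^sup>2) \<le> ln (real K)"
proof -
  have pos: "M h + (real K - 1)\<^sup>2 > 0" using M_nonneg[of h] K_real by (simp add: add_nonneg_pos)
  have "soda_eta K l h \<le> sqrt (ln (real K) / (M h + (real K - 1)\<^sup>2))" unfolding eta_eq by simp
  hence "(soda_eta K l h)\<^sup>2 \<le> (sqrt (ln (real K) / (M h + (real K - 1)\<^sup>2)))\<^sup>2"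
    using eta_pos[of h] by (intro power_mono) auto
  also have "\<dots> = ln (real K) / (M h + (real K - 1)\<^sup>2)" using lnK_pos pos by simp
  finally show ?thesis using pos by (simp add: field_simps)
qed

lemma eta_mono: "M h \<le> M h' \<Longrightarrow> soda_eta K l h' \<le> soda_eta K l h"
  unfolding eta_eq using lnK_pos K_real M_nonneg[of h]
  by (intro min.mono order_refl real_sqrt_le_mono divide_left_mono) (auto intro!: mult_pos_pos add_nonneg_pos)

end


lemma exp_second_order:
  fixes x :: real
  assumes "\<bar>x\<bar> \<le> 1/2"
  shows "exp (- x - x\<^sup>2) \<le> 1 - x"
proof (cases "x \<ge> 0")
  case True
  define f where "f = (\<lambda>y::real. ln (1 - y) + y + y\<^sup>2)"
  have "f 0 \<le> f x"
  proof (rule DERIV_nonneg_imp_nondecreasing[of 0 x f])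
    show "0 \<le> x" using True .
    fix y assume y: "0 \<le> y" "y \<le> x"
    have "1 - y > 0" using y assms by auto
    have "(f has_real_derivative (- 1 / (1 - y) + 1 + 2 * y)) (at y)"
      unfolding f_def using \<open>1 - y > 0\<close>
      by (auto intro!: derivative_eq_intros simp: power2_eq_square field_simps)
    moreover have "- 1 / (1 - y) + 1 + 2 * y \<ge> 0"
    proof -
      have "- 1 / (1 - y) + 1 + 2 * y = y * (1 - 2*y) / (1 - y)"
        using \<open>1 - y > 0\<close> by (simp add: field_simps)
      also have "\<dots> \<ge> 0" using y assms \<open>1 - y > 0\<close> by (intro divide_nonneg_pos mult_nonneg_nonneg) auto
      finally show ?thesis .
    qed
    ultimately show "\<exists>z. (f has_real_derivative z) (at y) \<and> 0 \<le> z" by blast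
  qed
  hence "- x - x\<^sup>2 \<le> ln (1 - x)" by (simp add: f_def)
  hence "exp (- x - x\<^sup>2) \<le> exp (ln (1 - x))" by simp
  also have "\<dots> = 1 - x" using assms by simp
  finally show ?thesis .
next
  case False
  have "(-x) - (-x)\<^sup>2 \<le> ln (1 + (-x))"
    using False assms by (intro ln_one_plus_pos_lower_bound) auto
  hence "- x - x\<^sup>2 \<le> ln (1 - x)" by simp
  hence "exp (- x - x\<^sup>2) \<le> exp (ln (1 - x))" by simp
  also have "\<dots> = 1 - x" using False by simp
  finally show ?thesis .
qed


context soda begin

lemma weight_eq: "soda_weight K l h a = exp (- soda_eta K l h * soda_D K l h a - (soda_eta K l h)\<^sup>2 * soda_S K l h a)"
  by (simp add: soda_weight_def)

lemma step_i:
  assumes x: "x \<in> {1..K} \<times> {1..K}"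
  shows "F (soda_eta K l h) (h @ [x]) \<le> F (soda_eta K l h) h + Y h x"
proof -
  define e where "e = soda_eta K l h"
  define g where "g a = - e * soda_D K l h a - e\<^sup>2 * soda_S K l h a" for a
  define z where "z a = soda_est K l (Suc (length h)) x a" for a
  have e0: "e > 0" unfolding e_def by (rule eta_pos)
  have ec: "e * (real K - 1) \<le> 1/2"
    using eta_le_c[of h] K_real unfolding e_def by (simp add: field_simps)
  have wg: "soda_weight K l h a = exp (g a)" for a unfolding g_def e_def weight_eq ..
  have Wg: "W h = (\<Sum>a\<in>{1..K}. exp (g a))" unfolding W_def wg ..
  have ppg: "pp h a = exp (g a) / W h" for a unfolding pp_def wg ..
  have zb: "\<bar>e * z a\<bar> \<le> 1/2" for a
  proof -
    have "\<bar>z a\<bar> \<le> real K - 1" unfolding z_def by (rule est_bound[OF x]) simp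
    hence "\<bar>e * z a\<bar> \<le> e * (real K - 1)" using e0 by (simp add: abs_mult mult_left_mono)
    thus ?thesis using ec by simp
  qed
  define V where "V = (\<Sum>a\<in>{1..K}. exp (- e * soda_D K l (h @ [x]) a - e\<^sup>2 * soda_S K l (h @ [x]) a))"
  have V_eq: "V = (\<Sum>a\<in>{1..K}. exp (g a) * exp (- (e * z a) - (e * z a)\<^sup>2))"
    unfolding V_def D_snoc S_snoc g_def z_def
    by (intro sum.cong refl) (simp add: exp_add[symmetric] algebra_simps power2_eq_square)
  have V_pos: "V > 0" unfolding V_def using K2 by (intro sum_pos) auto
  have "V \<le> (\<Sum>a\<in>{1..K}. exp (g a) * (1 - e * z a))"
    unfolding V_eq by (intro sum_mono mult_left_mono exp_second_order zb) auto
  also have "\<dots> = W h * (1 - e * (\<Sum>a\<in>{1..K}. pp h a * z a))"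
  proof -
    have "W h * (\<Sum>a\<in>{1..K}. pp h a * z a) = (\<Sum>a\<in>{1..K}. exp (g a) * z a)"
      unfolding sum_distrib_left ppg using W_pos[of h] by (intro sum.cong) auto
    moreover have "(\<Sum>a\<in>{1..K}. exp (g a) * (1 - e * z a)) = W h - e * (\<Sum>a\<in>{1..K}. exp (g a) * z a)"
      unfolding Wg by (simp add: algebra_simps sum_subtractf sum_distrib_left)
    ultimately show ?thesis by (simp add: algebra_simps)
  qed
  finally have V_le: "V \<le> W h * (1 - e * (\<Sum>a\<in>{1..K}. pp h a * z a))" .
  define P where "P = (\<Sum>a\<in>{1..K}. pp h a * z a)"
  have onep: "1 - e * P > 0"
  proof -
    have "0 < W h * (1 - e * P)" using V_pos V_le unfolding P_def by linarith
    thus ?thesis using W_pos[of h] by (simp add: zero_less_mult_iff)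
  qed
  have "ln (V / real K) \<le> ln (W h * (1 - e * P) / real K)"
    using V_pos V_le K2 unfolding P_def by (intro ln_mono divide_pos_pos divide_right_mono) auto
  also have "\<dots> = ln (W h / real K) + ln (1 - e * P)"
    using W_pos[of h] onep K2 by (simp add: ln_mult ln_div)
  also have "ln (1 - e * P) \<le> - e * P" using ln_le_minus_one[OF onep] by simp
  finally have "ln (V / real K) \<le> ln (W h / real K) - e * P" by simp
  hence "(1/e) * ln (V / real K) \<le> (1/e) * (ln (W h / real K) - e * P)"
    using e0 by (intro mult_left_mono) auto
  also have "\<dots> = (1/e) * ln (W h / real K) - P" using e0 by (simp add: field_simps)
  finally have *: "(1/e) * ln (V / real K) \<le> (1/e) * ln (W h / real K) - P" .
  have Fh: "F e h = (1/e) * ln (W h / real K)" unfolding F_def Wg g_def ..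
  have Fh': "F e (h @ [x]) = (1/e) * ln (V / real K)" unfolding F_def V_def ..
  have YP: "Y h x = - P" unfolding Y_def P_def z_def ..
  show ?thesis using * unfolding e_def[symmetric] Fh Fh' YP by simp
qed

lemma young1:
  fixes y a :: real
  assumes "y > 0" "0 \<le> a" "a \<le> 1"
  shows "y powr a \<le> a * y + (1 - a)"
  using Youngs_inequality_0[of a "1 - a" y 1] assms by simp

lemma step_ii:
  assumes e': "0 < e'" "e' \<le> e"
  shows "F e' h \<le> F e h + (e - e') * M h"
proof -
  have e0: "e > 0" using assms by simp
  define g where "g a = - e * soda_D K l h a - e\<^sup>2 * soda_S K l h a" for a
  define \<alpha> where "\<alpha> = e' / e"
  have \<alpha>: "0 < \<alpha>" "\<alpha> \<le> 1" using assms unfolding \<alpha>_def by auto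
  define m where "m = (\<Sum>a\<in>{1..K}. exp (g a)) / real K"
  have m0: "m > 0" unfolding m_def using K2 by (intro divide_pos_pos sum_pos) auto
  have each: "exp (- e' * soda_D K l h a - e'\<^sup>2 * soda_S K l h a) \<le> exp (\<alpha> * g a) * exp (e' * (e - e') * M h)"
    if a: "a \<in> {1..K}" for a
  proof -
    have "- e' * soda_D K l h a - e'\<^sup>2 * soda_S K l h a = \<alpha> * g a + e' * (e - e') * soda_S K l h a"
      unfolding g_def \<alpha>_def using e0 by (simp add: field_simps power2_eq_square)
    also have "\<dots> \<le> \<alpha> * g a + e' * (e - e') * M h"
      using S_le_M[OF a, of h] assms by (intro add_left_mono mult_left_mono) auto
    finally show ?thesis by (simp add: exp_add[symmetric])
  qed
  have powr_eq: "exp (\<alpha> * g a) = m powr \<alpha> * (exp (g a) / m) powr \<alpha>" for a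
  proof -
    have "(m * (exp (g a) / m)) powr \<alpha> = m powr \<alpha> * (exp (g a) / m) powr \<alpha>"
      using powr_mult[of m "exp (g a) / m" \<alpha>] m0 by simp
    moreover have "m * (exp (g a) / m) = exp (g a)" using m0 by simp
    ultimately have "m powr \<alpha> * (exp (g a) / m) powr \<alpha> = exp (g a) powr \<alpha>" by simp
    also have "\<dots> = exp (\<alpha> * g a)" by (simp add: powr_def)
    finally show ?thesis by simp
  qed
  have "(\<Sum>a\<in>{1..K}. exp (\<alpha> * g a)) \<le> (\<Sum>a\<in>{1..K}. m powr \<alpha> * (\<alpha> * (exp (g a) / m) + (1 - \<alpha>)))"
    unfolding powr_eq using m0 \<alpha> by (intro sum_mono mult_left_mono young1) auto
  also have "\<dots> = (\<Sum>a\<in>{1..K}. (m powr \<alpha> * \<alpha> / m) * exp (g a) + m powr \<alpha> * (1 - \<alpha>))"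
    by (intro sum.cong refl) (simp add: algebra_simps)
  also have "\<dots> = (m powr \<alpha> * \<alpha> / m) * (\<Sum>a\<in>{1..K}. exp (g a)) + m powr \<alpha> * (1 - \<alpha>) * real K"
    by (simp add: sum.distrib sum_distrib_left)
  also have "(\<Sum>a\<in>{1..K}. exp (g a)) = m * real K" unfolding m_def using K2 by simp
  also have "(m powr \<alpha> * \<alpha> / m) * (m * real K) + m powr \<alpha> * (1 - \<alpha>) * real K = m powr \<alpha> * real K"
    using m0 by (simp add: field_simps)
  finally have sa: "(\<Sum>a\<in>{1..K}. exp (\<alpha> * g a)) \<le> m powr \<alpha> * real K" .
  define V where "V = (\<Sum>a\<in>{1..K}. exp (- e' * soda_D K l h a - e'\<^sup>2 * soda_S K l h a))"
  have V0: "V > 0" unfolding V_def using K2 by (intro sum_pos) auto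
  have "V \<le> (\<Sum>a\<in>{1..K}. exp (\<alpha> * g a) * exp (e' * (e - e') * M h))"
    unfolding V_def by (intro sum_mono each)
  also have "\<dots> = (\<Sum>a\<in>{1..K}. exp (\<alpha> * g a)) * exp (e' * (e - e') * M h)"
    by (simp add: sum_distrib_right)
  also have "\<dots> \<le> m powr \<alpha> * real K * exp (e' * (e - e') * M h)"
    using sa by (intro mult_right_mono) auto
  finally have "V / real K \<le> m powr \<alpha> * exp (e' * (e - e') * M h)" using K2 by (simp add: field_simps)
  hence "ln (V / real K) \<le> ln (m powr \<alpha> * exp (e' * (e - e') * M h))"
    using V0 K2 by (intro ln_mono) auto
  also have "\<dots> = \<alpha> * ln m + e' * (e - e') * M h" using m0 by (simp add: ln_mult ln_powr)
  finally have "(1/e') * ln (V / real K) \<le> (1/e') * (\<alpha> * ln m + e' * (e - e') * M h)"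
    using assms by (intro mult_left_mono) auto
  also have "\<dots> = (1/e) * ln m + (e - e') * M h" unfolding \<alpha>_def using assms by (simp add: field_simps)
  finally show ?thesis unfolding F_def V_def[symmetric] m_def g_def .
qed

lemma ln_ge_quarter: "ln (real K) \<ge> 1/4"
proof -
  have "ln (2::real) \<ge> 1/4"
  proof -
    have "1 - 1/(2::real) \<le> ln 2" using ln_le_minus_one[of "1/(2::real)"] by (simp add: ln_div)
    thus ?thesis by simp
  qed
  moreover have "ln (2::real) \<le> ln (real K)" using K2 by simp
  ultimately show ?thesis by simp
qed

lemma main_ind:
  "valid h \<Longrightarrow> F (soda_eta K l h) h \<le> Ysum h + ln (real K) / soda_eta K l h - 2 * (real K - 1) * ln (real K)"
proof (induction h rule: rev_induct)
  case Nil
  have "F (soda_eta K l []) [] = 0" by (simp add: F_def)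
  moreover have "2 * (real K - 1) * ln (real K) \<le> ln (real K) / soda_eta K l []"
  proof -
    have "2 * (real K - 1) \<le> 1 / soda_eta K l []"
      using eta_le_c[of "[]"] eta_pos[of "[]"] K_real by (simp add: field_simps)
    thus ?thesis using lnK_pos by (simp add: divide_inverse mult.commute mult_right_mono)
  qed
  ultimately show ?case by (simp add: Ysum_def)
next
  case (snoc x h)
  have vh: "valid h" and x: "x \<in> {1..K} \<times> {1..K}" using snoc.prems by (auto simp: valid_def)
  define e where "e = soda_eta K l h"
  define e' where "e' = soda_eta K l (h @ [x])"
  have e0: "e > 0" "e' > 0" unfolding e_def e'_def by (rule eta_pos)+
  have ee: "e' \<le> e" unfolding e_def e'_def by (rule eta_mono[OF M_snoc_ge])
  have "F e' (h @ [x]) \<le> F e (h @ [x]) + (e - e') * M (h @ [x])" by (rule step_ii[OF e0(2) ee])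
  also have "F e (h @ [x]) \<le> F e h + Y h x" unfolding e_def by (rule step_i[OF x])
  also have "F e h \<le> Ysum h + ln (real K) / e - 2 * (real K - 1) * ln (real K)"
    unfolding e_def by (rule snoc.IH[OF vh])
  also have "(e - e') * M (h @ [x]) \<le> ln (real K) / e' - ln (real K) / e"
  proof -
    have "e\<^sup>2 * M (h @ [x]) \<le> e\<^sup>2 * (M h + (real K - 1)\<^sup>2)"
      using M_snoc_le[OF x] by (intro mult_left_mono) auto
    also have "\<dots> \<le> ln (real K)" unfolding e_def by (rule eta_sq)
    finally have Mb: "M (h @ [x]) \<le> ln (real K) / e\<^sup>2" using e0 by (simp add: field_simps)
    have "(e - e') * M (h @ [x]) \<le> (e - e') * (ln (real K) / e\<^sup>2)"
      using ee Mb by (intro mult_left_mono) auto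
    also have "\<dots> \<le> (e - e') * (ln (real K) / (e * e'))"
      using ee e0 lnK_pos by (intro mult_left_mono divide_left_mono) (auto simp: power2_eq_square intro!: mult_left_mono)
    also have "\<dots> = ln (real K) / e' - ln (real K) / e" using e0 by (simp add: field_simps)
    finally show ?thesis .
  qed
  finally show ?case unfolding e'_def[symmetric] Ysum_snoc by simp
qed

lemma pathwise:
  assumes "valid h" "a \<in> {1..K}"
  shows "- soda_D K l h a \<le> Ysum h + 3 * sqrt (ln (real K) * M h) + 2 * (real K - 1) * ln (real K)"
proof -
  define e where "e = soda_eta K l h"
  have e0: "e > 0" unfolding e_def by (rule eta_pos)
  have lower: "- soda_D K l h a - e * soda_S K l h a - ln (real K) / e \<le> F e h"
  proof -
    have "exp (- e * soda_D K l h a - e\<^sup>2 * soda_S K l h a) \<le> (\<Sum>b\<in>{1..K}. exp (- e * soda_D K l h b - e\<^sup>2 * soda_S K l h b))"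
      using assms(2) by (intro member_le_sum) auto
    hence "ln (exp (- e * soda_D K l h a - e\<^sup>2 * soda_S K l h a) / real K)
        \<le> ln ((\<Sum>b\<in>{1..K}. exp (- e * soda_D K l h b - e\<^sup>2 * soda_S K l h b)) / real K)"
      using K2 by (intro ln_mono divide_right_mono) auto
    hence "(1/e) * ln (exp (- e * soda_D K l h a - e\<^sup>2 * soda_S K l h a) / real K) \<le> F e h"
      unfolding F_def using e0 by (intro mult_left_mono) auto
    moreover have "(1/e) * ln (exp (- e * soda_D K l h a - e\<^sup>2 * soda_S K l h a) / real K)
       = - soda_D K l h a - e * soda_S K l h a - ln (real K) / e"
      using e0 K2 by (simp add: ln_div field_simps power2_eq_square)
    ultimately show ?thesis by simp
  qed
  have F_up: "F e h \<le> Ysum h + ln (real K) / e - 2 * (real K - 1) * ln (real K)"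
    unfolding e_def by (rule main_ind[OF assms(1)])
  have eS: "e * soda_S K l h a \<le> sqrt (ln (real K) * M h)"
  proof -
    have "e * soda_S K l h a \<le> e * M h" using S_le_M[OF assms(2)] e0 by (intro mult_left_mono) auto
    moreover have "(e * M h)\<^sup>2 \<le> ln (real K) * M h"
    proof -
      have "(e * M h)\<^sup>2 = e\<^sup>2 * M h * M h" by (simp add: power2_eq_square)
      also have "\<dots> \<le> e\<^sup>2 * (M h + (real K - 1)\<^sup>2) * M h"
        using M_nonneg[of h] by (intro mult_right_mono mult_left_mono) auto
      also have "\<dots> \<le> ln (real K) * M h" unfolding e_def using M_nonneg[of h]
        by (intro mult_right_mono eta_sq) auto
      finally show ?thesis .
    qed
    hence "e * M h \<le> sqrt (ln (real K) * M h)" by (simp add: real_le_rsqrt)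
    ultimately show ?thesis by simp
  qed
  have le: "ln (real K) / e \<le> sqrt (ln (real K) * M h) + 2 * (real K - 1) * ln (real K)"
  proof (cases "e = 1 / (2 * (real K - 1))")
    case True
    have "ln (real K) / e = 2 * (real K - 1) * ln (real K)" unfolding True using K_real by simp
    moreover have "sqrt (ln (real K) * M h) \<ge> 0" using mult_nonneg_nonneg[OF less_imp_le[OF lnK_pos] M_nonneg[of h]] by simp
    ultimately show ?thesis by linarith
  next
    case False
    define X where "X = M h + (real K - 1)\<^sup>2"
    have X0: "X > 0" unfolding X_def using M_nonneg[of h] K_real by (simp add: add_nonneg_pos)
    have es: "e = sqrt (ln (real K) / X)" using False unfolding e_def eta_eq X_def min_def by (auto split: if_splits)
    have e0': "e > 0" unfolding e_def by (rule eta_pos)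
    have sq: "ln (real K) / X * (ln (real K) * X) = (ln (real K))\<^sup>2" using X0 by (simp add: field_simps power2_eq_square)
    have "e * sqrt (ln (real K) * X) = sqrt (ln (real K) / X * (ln (real K) * X))"
      unfolding es by (rule real_sqrt_mult[symmetric])
    also have "\<dots> = ln (real K)" unfolding sq using lnK_pos by simp
    finally have es2: "e * sqrt (ln (real K) * X) = ln (real K)" .
    have "ln (real K) / e = sqrt (ln (real K) * X)"
      using e0' es2 by (metis nonzero_mult_div_cancel_left less_irrefl)
    also have "sqrt (ln (real K) * X) \<le> sqrt (ln (real K) * M h) + sqrt (ln (real K) * (real K - 1)\<^sup>2)"
    proof -
      have "ln (real K) * X = ln (real K) * M h + ln (real K) * (real K - 1)\<^sup>2" unfolding X_def by (simp add: distrib_left)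
      moreover have "sqrt (ln (real K) * M h + ln (real K) * (real K - 1)\<^sup>2) \<le> sqrt (ln (real K) * M h) + sqrt (ln (real K) * (real K - 1)\<^sup>2)"
        by (rule sqrt_add_le_add_sqrt) (use mult_nonneg_nonneg[OF less_imp_le[OF lnK_pos] M_nonneg[of h]] lnK_pos in auto)
      ultimately show ?thesis by simp
    qed
    also have "sqrt (ln (real K) * (real K - 1)\<^sup>2) = sqrt (ln (real K)) * (real K - 1)"
      using K_real by (simp add: real_sqrt_mult)
    also have "\<dots> \<le> 2 * (real K - 1) * ln (real K)"
    proof -
      have "sqrt (ln (real K)) \<le> 2 * ln (real K)"
      proof (rule real_le_lsqrt)
        show "ln (real K) \<le> (2 * ln (real K))\<^sup>2"
        proof -
          have "ln (real K) * 1 \<le> ln (real K) * (4 * ln (real K))"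
            using lnK_pos ln_ge_quarter by (intro mult_left_mono) auto
          thus ?thesis by (simp add: power2_eq_square)
        qed
      qed (use lnK_pos in auto)
      hence "sqrt (ln (real K)) * (real K - 1) \<le> (2 * ln (real K)) * (real K - 1)"
        using K_real by (intro mult_right_mono) auto
      thus ?thesis by (simp add: algebra_simps)
    qed
    finally show ?thesis by simp
  qed
  show ?thesis using lower F_up eS le by linarith
qed

end


context soda begin

definition SP :: "(nat \<times> nat) list \<Rightarrow> (nat \<times> nat \<Rightarrow> real) \<Rightarrow> real" where
  "SP h f = (\<Sum>A\<in>{1..K}. pp h A * ((\<Sum>B\<in>{1..K} - {A}. f (A, B)) / (real K - 1)))"

lemma SE_SP: "SE h f = SP h (\<lambda>x. f (h @ [x]))"
  by (simp add: SE_def SP_def)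

lemma SP_add: "SP h (\<lambda>x. f x + g x) = SP h f + SP h g"
  by (simp add: SP_def sum.distrib add_divide_distrib distrib_left)

lemma SP_mult: "SP h (\<lambda>x. c * f x) = c * SP h f"
  by (simp add: SP_def sum_distrib_left algebra_simps sum_divide_distrib[symmetric])

lemma SP_sum: "finite I \<Longrightarrow> SP h (\<lambda>x. \<Sum>i\<in>I. f i x) = (\<Sum>i\<in>I. SP h (f i))"
  by (induction I rule: finite_induct) (simp_all add: SP_add, simp add: SP_def)

lemma SP_const: "SP h (\<lambda>x. c) = c"
proof -
  have "SP h (\<lambda>x. c) = (\<Sum>A\<in>{1..K}. pp h A * c)"
    unfolding SP_def using K_real
    by (intro sum.cong refl) (simp add: card_minus of_nat_diff)
  also have "\<dots> = c" using sum_pp[of h] by (simp add: sum_distrib_right[symmetric])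
  finally show ?thesis .
qed

lemma SP_mono: "(\<And>A B. A \<in> {1..K} \<Longrightarrow> B \<in> {1..K} \<Longrightarrow> f (A, B) \<le> g (A, B)) \<Longrightarrow> SP h f \<le> SP h g"
  unfolding SP_def using K_real
  by (intro sum_mono mult_left_mono divide_right_mono pp_nonneg) auto

lemma sum_remove_zero:
  fixes f :: "nat \<Rightarrow> real"
  assumes "A \<in> {1..K}" "f A = 0"
  shows "(\<Sum>B\<in>{1..K} - {A}. f B) = (\<Sum>B\<in>{1..K}. f B)"
  using assms by (simp add: sum_diff1)

lemma lA_eq:
  assumes a: "a \<in> {1..K}"
  shows "SP h (\<lambda>x. l t (fst x) + soda_est K l t x a) = l t a"
proof -
  have inner: "(\<Sum>B\<in>{1..K} - {A}. l t A + soda_est K l t (A, B) a) / (real K - 1) = l t a"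
    if A: "A \<in> {1..K}" for A
  proof -
    have "(\<Sum>B\<in>{1..K} - {A}. l t A + soda_est K l t (A, B) a)
        = (real K - 1) * l t A + (real K - 1) * (\<Sum>B\<in>{1..K} - {A}. (if B = a then 1 else 0) * (l t B - l t A))"
    proof -
      have "(\<Sum>B\<in>{1..K} - {A}. l t A + soda_est K l t (A, B) a)
          = (\<Sum>B\<in>{1..K} - {A}. l t A) + (\<Sum>B\<in>{1..K} - {A}. (real K - 1) * ((if B = a then 1 else 0) * (l t B - l t A)))"
        by (simp add: sum.distrib soda_est_def mult.assoc)
      also have "(\<Sum>B\<in>{1..K} - {A}. l t A) = (real K - 1) * l t A"
        using card_minus[OF A] K2 by (simp add: of_nat_diff)
      finally show ?thesis by (simp add: sum_distrib_left)
    qed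
    also have "(\<Sum>B\<in>{1..K} - {A}. (if B = a then 1 else 0) * (l t B - l t A)) = l t a - l t A"
    proof -
      have "(\<Sum>B\<in>{1..K} - {A}. (if B = a then 1 else 0) * (l t B - l t A)) = (\<Sum>B\<in>{1..K}. (if B = a then 1 else 0) * (l t B - l t A))"
        by (rule sum_remove_zero[OF A]) simp
      also have "\<dots> = (\<Sum>B\<in>{1..K}. if B = a then l t a - l t A else 0)"
        by (intro sum.cong) auto
      also have "\<dots> = l t a - l t A" using a by simp
      finally show ?thesis .
    qed
    finally show ?thesis using K_real by (simp add: field_simps)
  qed
  have "SP h (\<lambda>x. l t (fst x) + soda_est K l t x a) = (\<Sum>A\<in>{1..K}. pp h A * l t a)"
    unfolding SP_def using inner by (intro sum.cong refl) simp
  also have "\<dots> = l t a" using sum_pp[of h] by (simp add: sum_distrib_right[symmetric])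
  finally show ?thesis .
qed

lemma Y_zero: "SP h (Y h) = 0"
proof -
  define t where "t = Suc (length h)"
  have Yeq: "Y h (A, B) = - pp h B * (real K - 1) * (l t B - l t A)" if "B \<in> {1..K}" for A B
  proof -
    have "(\<Sum>a\<in>{1..K}. pp h a * soda_est K l t (A, B) a) = (\<Sum>a\<in>{1..K}. if a = B then pp h B * (real K - 1) * (l t B - l t A) else 0)"
      by (intro sum.cong) (auto simp: soda_est_def)
    also have "\<dots> = pp h B * (real K - 1) * (l t B - l t A)" using that by simp
    finally show ?thesis unfolding Y_def t_def by simp
  qed
  have "SP h (Y h) = (\<Sum>A\<in>{1..K}. \<Sum>B\<in>{1..K}. - (pp h A * pp h B * (l t B - l t A)))"
    unfolding SP_def
  proof (intro sum.cong refl)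
    fix A assume A: "A \<in> {1..K}"
    have "(\<Sum>B\<in>{1..K} - {A}. Y h (A, B)) = (\<Sum>B\<in>{1..K} - {A}. - pp h B * (real K - 1) * (l t B - l t A))"
      using Yeq by (intro sum.cong) auto
    also have "\<dots> = (\<Sum>B\<in>{1..K}. - pp h B * (real K - 1) * (l t B - l t A))"
      by (rule sum_remove_zero[OF A]) simp
    finally show "pp h A * ((\<Sum>B\<in>{1..K} - {A}. Y h (A, B)) / (real K - 1)) = (\<Sum>B\<in>{1..K}. - (pp h A * pp h B * (l t B - l t A)))"
      using K_real by (simp add: sum_distrib_left sum_divide_distrib[symmetric] field_simps)
  qed
  also have "\<dots> = (\<Sum>A\<in>{1..K}. pp h A * l t A * (\<Sum>B\<in>{1..K}. pp h B)) - (\<Sum>A\<in>{1..K}. pp h A * (\<Sum>B\<in>{1..K}. pp h B * l t B))"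
    by (simp add: sum_distrib_left sum_subtractf[symmetric] algebra_simps sum_negf)
  also have "\<dots> = 0" using sum_pp[of h] by (simp add: sum_distrib_right[symmetric])
  finally show ?thesis .
qed

lemma ind_P:
  assumes a: "a \<in> {1..K}"
  shows "SP h (\<lambda>x. if snd x = a then 1 else 0) \<le> 1 / (real K - 1)"
    and "SP h (\<lambda>x. if snd x = a then 1 else 0) \<ge> 0"
proof -
  have "SP h (\<lambda>x. if snd x = a then 1 else 0) \<le> SP h (\<lambda>x. 1 / (real K - 1))"
  proof -
    have "SP h (\<lambda>x. if snd x = a then 1 else 0) = (\<Sum>A\<in>{1..K}. pp h A * ((\<Sum>B\<in>{1..K} - {A}. if B = a then 1 else 0) / (real K - 1)))"
      by (simp add: SP_def)
    also have "\<dots> \<le> (\<Sum>A\<in>{1..K}. pp h A * (1 / (real K - 1)))"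
    proof (intro sum_mono mult_left_mono pp_nonneg divide_right_mono)
      fix A show "(\<Sum>B\<in>{1..K} - {A}. if B = a then 1 else 0) \<le> (1::real)" by (simp add: sum.delta)
    qed (use K_real in auto)
    also have "\<dots> = 1 / (real K - 1)" using sum_pp[of h] by (simp add: sum_divide_distrib[symmetric])
    finally show ?thesis by (simp add: SP_const)
  qed
  thus "SP h (\<lambda>x. if snd x = a then 1 else 0) \<le> 1 / (real K - 1)" by (simp add: SP_const)
  have "SP h (\<lambda>x. 0) \<le> SP h (\<lambda>x. if snd x = a then 1 else 0)" by (rule SP_mono) auto
  thus "SP h (\<lambda>x. if snd x = a then 1 else 0) \<ge> 0" by (simp add: SP_const)
qed

lemma exp_step:
  assumes a: "a \<in> {1..K}" and lam: "lam \<ge> 0"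
  shows "SP h (\<lambda>x. exp (lam * (if snd x = a then 1 else 0))) \<le> exp (lam / (real K - 1) + lam\<^sup>2 / 8)"
proof -
  define P where "P = SP h (\<lambda>x. if snd x = a then 1 else 0)"
  have "SP h (\<lambda>x. exp (lam * (if snd x = a then 1 else 0))) = SP h (\<lambda>x. 1 + (exp lam - 1) * (if snd x = a then 1 else 0))"
  proof -
    have "(\<lambda>x. exp (lam * (if snd x = a then 1 else 0))) = (\<lambda>x. 1 + (exp lam - 1) * (if snd x = a then 1 else 0))"
      by (rule ext) simp
    thus ?thesis by (rule arg_cong[where f="SP h"])
  qed
  also have "\<dots> = 1 + P * (exp lam - 1)" unfolding P_def by (simp add: SP_add SP_mult SP_const)
  also have "\<dots> \<le> exp (lam * P + lam\<^sup>2 / 8)"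
  proof -
    have P0: "P \<ge> 0" unfolding P_def by (rule ind_P(2)[OF a])
    have pos: "1 + P * (exp lam - 1) > 0" using P0 lam by (intro add_pos_nonneg mult_nonneg_nonneg) auto
    have "- lam * P + ln (1 + P * (exp lam - 1)) \<le> lam\<^sup>2 / 8"
      using Hoeffdings_lemma_aux[OF lam P0] by simp
    hence "ln (1 + P * (exp lam - 1)) \<le> lam * P + lam\<^sup>2 / 8" by simp
    hence "exp (ln (1 + P * (exp lam - 1))) \<le> exp (lam * P + lam\<^sup>2 / 8)" by simp
    thus ?thesis using pos by simp
  qed
  also have "\<dots> \<le> exp (lam / (real K - 1) + lam\<^sup>2 / 8)"
  proof -
    have "lam * P \<le> lam * (1 / (real K - 1))" unfolding P_def using ind_P(1)[OF a, of h] lam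
      by (intro mult_left_mono) auto
    thus ?thesis by simp
  qed
  finally show ?thesis .
qed

end


context soda begin

definition Lsum :: "nat \<Rightarrow> (nat \<times> nat) list \<Rightarrow> real" where
  "Lsum n h = (\<Sum>t\<in>{1..n}. l t (fst (h ! (t - 1))))"

lemma Lsum_snoc: "length h = n \<Longrightarrow> Lsum (Suc n) (h @ [x]) = Lsum n h + l (Suc n) (fst x)"
proof -
  assume len: "length h = n"
  have "Lsum (Suc n) (h @ [x]) = (\<Sum>t\<in>{1..n}. l t (fst ((h @ [x]) ! (t - 1)))) + l (Suc n) (fst x)"
    unfolding Lsum_def using len by (simp add: sum.cl_ivl_Suc nth_append)
  also have "(\<Sum>t\<in>{1..n}. l t (fst ((h @ [x]) ! (t - 1)))) = Lsum n h"
    unfolding Lsum_def using len by (intro sum.cong refl) (auto simp: nth_append)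
  finally show ?thesis .
qed

lemma integrable_traj[simp]: "integrable (measure_pmf (soda_traj K l T)) (f :: _ \<Rightarrow> real)"
  by (rule integrable_measure_pmf_finite[OF finite_traj])

lemma regret_mart:
  assumes a: "a \<in> {1..K}"
  shows "measure_pmf.expectation (soda_traj K l T) (\<lambda>h. Lsum T h + soda_D K l h a - (\<Sum>t\<in>{1..T}. l t a)) = 0"
proof -
  define G where "G n h = Lsum n h + soda_D K l h a - (\<Sum>t\<in>{1..n}. l t a)" for n h
  have "measure_pmf.expectation (soda_traj K l T) (G T) = G 0 []"
  proof (rule mart_eq)
    fix n h assume len: "length h = n" and "valid h"
    have "SE h (G (Suc n)) = SP h (\<lambda>x. (G n h - l (Suc n) a) + (l (Suc n) (fst x) + soda_est K l (Suc n) x a))"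
      unfolding SE_SP G_def using len by (simp add: Lsum_snoc D_snoc algebra_simps)
    also have "\<dots> = G n h" using lA_eq[OF a] by (simp add: SP_add SP_const)
    finally show "SE h (G (Suc n)) = G n h" .
  qed
  moreover have "G 0 [] = 0" by (simp add: G_def Lsum_def)
  ultimately have "measure_pmf.expectation (soda_traj K l T) (G T) = 0" by simp
  thus ?thesis unfolding G_def .
qed

lemma Ysum_mart: "measure_pmf.expectation (soda_traj K l T) Ysum = 0"
proof -
  have "measure_pmf.expectation (soda_traj K l T) ((\<lambda>n. Ysum) T) = (\<lambda>n. Ysum) 0 []"
  proof (rule mart_eq)
    fix n h assume len: "length h = n" and "valid h"
    have "SE h Ysum = SP h (\<lambda>x. Ysum h + Y h x)" unfolding SE_SP by (simp add: Ysum_snoc)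
    also have "\<dots> = Ysum h" by (simp add: SP_add SP_const Y_zero)
    finally show "SE h Ysum = Ysum h" .
  qed
  thus ?thesis by (simp add: Ysum_def)
qed

definition N :: "(nat \<times> nat) list \<Rightarrow> nat \<Rightarrow> real" where
  "N h a = (\<Sum>s<length h. if snd (h ! s) = a then 1 else 0)"

lemma N_snoc: "N (h @ [x]) a = N h a + (if snd x = a then 1 else 0)"
  by (simp add: N_def nth_append)

lemma N_nonneg: "N h a \<ge> 0" by (simp add: N_def sum_nonneg)

lemma exp_mart:
  assumes lam: "lam \<ge> 0"
  defines "c \<equiv> lam / (real K - 1) + lam\<^sup>2 / 8"
  shows "measure_pmf.expectation (soda_traj K l T) (\<lambda>h. \<Sum>a\<in>{1..K}. exp (lam * N h a)) \<le> real K * exp (real T * c)"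
proof -
  define G where "G n h = exp (- (real n * c)) * (\<Sum>a\<in>{1..K}. exp (lam * N h a))" for n h
  have "measure_pmf.expectation (soda_traj K l T) (G T) \<le> G 0 []"
  proof (rule mart_le)
    fix n h assume len: "length h = n" and "valid h"
    have "SE h (G (Suc n)) = SP h (\<lambda>x. \<Sum>a\<in>{1..K}. (exp (- (real (Suc n) * c)) * exp (lam * N h a)) * exp (lam * (if snd x = a then 1 else 0)))"
      unfolding SE_SP G_def
      by (simp add: N_snoc sum_distrib_left distrib_left exp_add mult.assoc)
    also have "\<dots> = (\<Sum>a\<in>{1..K}. (exp (- (real (Suc n) * c)) * exp (lam * N h a)) * SP h (\<lambda>x. exp (lam * (if snd x = a then 1 else 0))))"
      by (simp add: SP_sum SP_mult)
    also have "\<dots> \<le> (\<Sum>a\<in>{1..K}. (exp (- (real (Suc n) * c)) * exp (lam * N h a)) * exp c)"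
      unfolding c_def by (intro sum_mono mult_left_mono exp_step lam) auto
    also have "\<dots> = G n h" unfolding G_def
      by (simp add: sum_distrib_left sum_distrib_right mult_ac exp_add[symmetric] algebra_simps)
    finally show "SE h (G (Suc n)) \<le> G n h" .
  qed
  moreover have "measure_pmf.expectation (soda_traj K l T) (G T) = exp (- (real T * c)) * measure_pmf.expectation (soda_traj K l T) (\<lambda>h. \<Sum>a\<in>{1..K}. exp (lam * N h a))"
    unfolding G_def by (rule integral_mult_right_zero)
  moreover have "G 0 [] = real K" by (simp add: G_def N_def)
  ultimately have "exp (- (real T * c)) * measure_pmf.expectation (soda_traj K l T) (\<lambda>h. \<Sum>a\<in>{1..K}. exp (lam * N h a)) \<le> real K"
    by simp
  hence "exp (real T * c) * (exp (- (real T * c)) * measure_pmf.expectation (soda_traj K l T) (\<lambda>h. \<Sum>a\<in>{1..K}. exp (lam * N h a))) \<le> exp (real T * c) * real K"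
    by (intro mult_left_mono) auto
  thus ?thesis by (simp add: mult.assoc[symmetric] exp_add[symmetric] mult.commute)
qed

end


lemma sqrt_tangent:
  fixes x y :: real
  assumes "x \<ge> 0" "y > 0"
  shows "sqrt x \<le> (x + y) / (2 * sqrt y)"
proof -
  have "0 \<le> (sqrt x - sqrt y)\<^sup>2" by simp
  hence "2 * sqrt x * sqrt y \<le> x + y" using assms by (simp add: power2_eq_square algebra_simps)
  thus ?thesis using assms by (simp add: field_simps)
qed

context soda begin

definition maxN where "maxN h = Max ((\<lambda>a. N h a) ` {1..K})"

lemma N_le_maxN: "a \<in> {1..K} \<Longrightarrow> N h a \<le> maxN h"
  unfolding maxN_def by (rule Max_ge) auto

lemma maxN_nonneg: "maxN h \<ge> 0"
  using N_le_maxN[of 1 h] N_nonneg[of h 1] K2 by auto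

lemma maxN_le_ln:
  assumes lam: "lam > 0"
  shows "maxN h \<le> ln (\<Sum>a\<in>{1..K}. exp (lam * N h a)) / lam"
proof -
  have "maxN h \<in> (\<lambda>a. N h a) ` {1..K}" unfolding maxN_def using K2 by (intro Max_in) auto
  then obtain a where a: "a \<in> {1..K}" and m: "maxN h = N h a" by auto
  have "exp (lam * N h a) \<le> (\<Sum>a\<in>{1..K}. exp (lam * N h a))" using a by (intro member_le_sum) auto
  moreover have "0 < (\<Sum>a\<in>{1..K}. exp (lam * N h a))" by (rule order_less_le_trans[OF exp_gt_zero calculation])
  ultimately have "ln (exp (lam * N h a)) \<le> ln (\<Sum>a\<in>{1..K}. exp (lam * N h a))" by (intro ln_mono) auto
  hence "lam * N h a \<le> ln (\<Sum>a\<in>{1..K}. exp (lam * N h a))" by simp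
  thus ?thesis using m lam by (simp add: field_simps)
qed

lemma S_le_N:
  assumes epsb: "\<forall>t\<ge>1. \<forall>a\<in>{1..K}. \<forall>a'\<in>{1..K}. \<bar>l t a - l t a'\<bar> \<le> eps"
    and v: "valid h"
  shows "soda_S K l h a \<le> (real K - 1)\<^sup>2 * eps\<^sup>2 * N h a"
proof -
  have "soda_S K l h a = (\<Sum>s<length h. (soda_est K l (Suc s) (h ! s) a)\<^sup>2)" by (simp add: soda_S_def)
  also have "\<dots> \<le> (\<Sum>s<length h. (real K - 1)\<^sup>2 * eps\<^sup>2 * (if snd (h ! s) = a then 1 else 0))"
  proof (intro sum_mono)
    fix s assume "s \<in> {..<length h}"
    hence "h ! s \<in> set h" by simp
    hence hs: "fst (h ! s) \<in> {1..K}" "snd (h ! s) \<in> {1..K}" using v unfolding valid_def by auto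
    have d: "(l (Suc s) (snd (h ! s)) - l (Suc s) (fst (h ! s)))\<^sup>2 \<le> eps\<^sup>2"
    proof -
      have "\<bar>l (Suc s) (snd (h ! s)) - l (Suc s) (fst (h ! s))\<bar> \<le> eps" using epsb hs by auto
      from power_mono[OF this abs_ge_zero, of 2] show ?thesis by simp
    qed
    show "(soda_est K l (Suc s) (h ! s) a)\<^sup>2 \<le> (real K - 1)\<^sup>2 * eps\<^sup>2 * (if snd (h ! s) = a then 1 else 0)"
    proof (cases "snd (h ! s) = a")
      case True
      have "(real K - 1)\<^sup>2 * (l (Suc s) (snd (h ! s)) - l (Suc s) (fst (h ! s)))\<^sup>2 \<le> (real K - 1)\<^sup>2 * eps\<^sup>2"
        using d by (intro mult_left_mono) auto
      thus ?thesis using True unfolding soda_est_def by (simp add: power_mult_distrib)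
    next
      case False
      thus ?thesis unfolding soda_est_def by simp
    qed
  qed
  also have "\<dots> = (real K - 1)\<^sup>2 * eps\<^sup>2 * N h a" by (simp add: N_def sum_distrib_left)
  finally show ?thesis .
qed

lemma M_le_maxN:
  assumes epsb: "\<forall>t\<ge>1. \<forall>a\<in>{1..K}. \<forall>a'\<in>{1..K}. \<bar>l t a - l t a'\<bar> \<le> eps"
    and v: "valid h"
  shows "M h \<le> (real K - 1)\<^sup>2 * eps\<^sup>2 * maxN h"
  unfolding M_def
proof (subst Max_le_iff, simp, use K2 in simp, clarify)
  fix a assume a: "a \<in> {1..K}"
  have "soda_S K l h a \<le> (real K - 1)\<^sup>2 * eps\<^sup>2 * N h a" by (rule S_le_N[OF epsb v])
  also have "\<dots> \<le> (real K - 1)\<^sup>2 * eps\<^sup>2 * maxN h" by (intro mult_left_mono N_le_maxN[OF a]) auto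
  finally show "soda_S K l h a \<le> (real K - 1)\<^sup>2 * eps\<^sup>2 * maxN h" .
qed

lemma EmaxN_bound:
  assumes T: "T \<ge> 1"
  shows "measure_pmf.expectation (soda_traj K l T) maxN
     \<le> real T / (real K - 1) + sqrt (real T) * (2 + sqrt (ln (sqrt (real T) * (real K - 1)) / 2))"
proof -
  define lam where "lam = sqrt (8 * ln (real K) / real T)"
  have T0: "real T > 0" using T by simp
  have lam0: "lam > 0" unfolding lam_def using lnK_pos T0 by simp
  have lamsq: "lam\<^sup>2 = 8 * ln (real K) / real T" unfolding lam_def using lnK_pos T0 by simp
  define c where "c = lam / (real K - 1) + lam\<^sup>2 / 8"
  define X where "X h = (\<Sum>a\<in>{1..K}. exp (lam * N h a))" for h
  define z where "z = real K * exp (real T * c)"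
  have z0: "z > 0" unfolding z_def using K2 by simp
  have X0: "X h > 0" for h unfolding X_def using K2 by (intro sum_pos) auto
  have EX: "measure_pmf.expectation (soda_traj K l T) X \<le> z"
    unfolding X_def z_def c_def by (rule exp_mart) (use lam0 in simp)
  have "measure_pmf.expectation (soda_traj K l T) maxN \<le> measure_pmf.expectation (soda_traj K l T) (\<lambda>h. ln (X h) / lam)"
    by (rule integral_mono[OF integrable_traj integrable_traj]) (unfold X_def, rule maxN_le_ln[OF lam0])
  also have "\<dots> \<le> measure_pmf.expectation (soda_traj K l T) (\<lambda>h. (ln z + X h / z - 1) / lam)"
  proof (intro integral_mono integrable_traj divide_right_mono)
    fix h
    have "ln (X h / z) \<le> X h / z - 1" using X0[of h] z0 by (intro ln_le_minus_one) auto
    thus "ln (X h) \<le> ln z + X h / z - 1" using X0[of h] z0 by (simp add: ln_div)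
  qed (use lam0 in auto)
  also have "\<dots> = (ln z + measure_pmf.expectation (soda_traj K l T) X / z - 1) / lam"
    by (simp add: diff_divide_distrib add_divide_distrib)
  also have "\<dots> \<le> (ln z + z / z - 1) / lam"
    using EX z0 lam0 by (intro divide_right_mono add_left_mono diff_right_mono) (auto simp: divide_right_mono)
  also have "\<dots> = ln z / lam" using z0 by simp
  also have "ln z = ln (real K) + real T * c" unfolding z_def using K2 by (simp add: ln_mult)
  also have "(ln (real K) + real T * c) / lam = real T / (real K - 1) + real T * lam / 4"
  proof -
    have "ln (real K) = real T * lam\<^sup>2 / 8" using lamsq T0 by (simp add: field_simps)
    thus ?thesis unfolding c_def using lam0 K_real by (simp add: field_simps power2_eq_square)
  qed
  also have "real T * lam / 4 \<le> sqrt (real T) * (2 + sqrt (ln (sqrt (real T) * (real K - 1)) / 2))"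
  proof -
    define L' where "L' = ln (sqrt (real T) * (real K - 1))"
    have "(real T * lam / 4)\<^sup>2 = real T * (ln (real K) / 2)"
      using lamsq T0 by (simp add: power_mult_distrib field_simps power2_eq_square)
    hence e1: "real T * lam / 4 = sqrt (real T) * sqrt (ln (real K) / 2)"
      using lam0 T0 by (metis real_sqrt_mult real_sqrt_unique divide_nonneg_pos less_imp_le mult_nonneg_nonneg zero_less_numeral of_nat_0_le_iff)
    have sT: "sqrt (real T) \<ge> 1" using T by simp
    have "1 * 1 \<le> sqrt (real T) * (real K - 1)" by (rule mult_mono[OF sT K_real]) auto
    hence L'0: "L' \<ge> 0" unfolding L'_def by simp
    have "ln (real K) \<le> L' + 1"
    proof -
      have "ln (real K) - ln (real K - 1) = ln (real K / (real K - 1))" using K_real by (simp add: ln_div)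
      also have "\<dots> \<le> real K / (real K - 1) - 1" using K_real by (intro ln_le_minus_one) auto
      also have "\<dots> = 1 / (real K - 1)" using K_real by (simp add: field_simps)
      also have "\<dots> \<le> 1" using K_real by simp
      finally have a: "ln (real K) \<le> ln (real K - 1) + 1" by simp
      have "ln (real K - 1) \<le> L'" unfolding L'_def using K_real sT
        by (subst ln_le_cancel_iff) (auto simp: mult_le_cancel_right1)
      thus ?thesis using a by simp
    qed
    hence "ln (real K) / 2 \<le> 4 + L' / 2" by simp
    hence "sqrt (ln (real K) / 2) \<le> sqrt (4 + L' / 2)" by simp
    also have "\<dots> \<le> sqrt 4 + sqrt (L' / 2)" by (rule sqrt_add_le_add_sqrt) (use L'0 in auto)
    also have "sqrt 4 = (2::real)" by (simp add: real_sqrt_eq_iff[symmetric])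
    finally have "sqrt (ln (real K) / 2) \<le> 2 + sqrt (L' / 2)" .
    hence "sqrt (real T) * sqrt (ln (real K) / 2) \<le> sqrt (real T) * (2 + sqrt (L' / 2))"
      by (intro mult_left_mono) auto
    thus ?thesis unfolding e1 L'_def .
  qed
  finally show ?thesis by simp
qed


lemma final_bound:
  assumes epsb: "\<forall>t\<ge>1. \<forall>a\<in>{1..K}. \<forall>a'\<in>{1..K}. \<bar>l t a - l t a'\<bar> \<le> eps"
    and eps0: "eps \<ge> 0" and T: "T \<ge> 1"
  shows "soda_regret K l T \<le>
    4 * eps * sqrt ((real K - 1) * ln (real K)) *
      sqrt (real T + (real K - 1) * sqrt (real T) *
        (2 + sqrt (ln (sqrt (real T) * (real K - 1)) / 2)))
    + 4 * (real K - 1) * ln (real K)"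
proof -
  let ?E = "measure_pmf.expectation (soda_traj K l T)"
  define y where "y = real T / (real K - 1) + sqrt (real T) * (2 + sqrt (ln (sqrt (real T) * (real K - 1)) / 2))"
  have Qy: "real T + (real K - 1) * sqrt (real T) * (2 + sqrt (ln (sqrt (real T) * (real K - 1)) / 2)) = (real K - 1) * y"
    unfolding y_def using K_real by (simp add: field_simps)
  have "1 * 1 \<le> sqrt (real T) * (real K - 1)" by (rule mult_mono) (use T K_real in auto)
  hence lnT: "0 \<le> ln (sqrt (real T) * (real K - 1))" by simp
  have y0: "y > 0" unfolding y_def using T K_real lnT
    by (intro add_pos_nonneg divide_pos_pos mult_nonneg_nonneg) auto
  have "Min ((\<lambda>a. \<Sum>t\<in>{1..T}. l t a) ` {1..K}) \<in> (\<lambda>a. \<Sum>t\<in>{1..T}. l t a) ` {1..K}"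
    using K2 by (intro Min_in) auto
  then obtain a where a: "a \<in> {1..K}" and amin: "Min ((\<lambda>a. \<Sum>t\<in>{1..T}. l t a) ` {1..K}) = (\<Sum>t\<in>{1..T}. l t a)"
    by auto
  have reg: "soda_regret K l T = ?E (\<lambda>h. - soda_D K l h a)"
  proof -
    have "?E (\<lambda>h. Lsum T h + soda_D K l h a - (\<Sum>t\<in>{1..T}. l t a)) = ?E (\<lambda>h. Lsum T h) + ?E (\<lambda>h. soda_D K l h a) - (\<Sum>t\<in>{1..T}. l t a)"
      by (simp add: integral_add integral_diff)
    moreover have "?E (\<lambda>h. - soda_D K l h a) = - ?E (\<lambda>h. soda_D K l h a)" by (rule integral_minus)
    ultimately show ?thesis using regret_mart[OF a, of T]
      unfolding soda_regret_def amin Lsum_def by linarith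
  qed
  have "?E (\<lambda>h. - soda_D K l h a) \<le> ?E (\<lambda>h. Ysum h + 3 * sqrt (ln (real K) * M h) + 2 * (real K - 1) * ln (real K))"
  proof (intro integral_mono_AE integrable_traj, unfold AE_measure_pmf_iff, intro ballI)
    fix h assume "h \<in> set_pmf (soda_traj K l T)"
    hence v: "valid h" by (auto dest: traj_valid)
    show "- soda_D K l h a \<le> Ysum h + 3 * sqrt (ln (real K) * M h) + 2 * (real K - 1) * ln (real K)"
      by (rule pathwise[OF v a])
  qed
  also have "\<dots> = ?E Ysum + 3 * ?E (\<lambda>h. sqrt (ln (real K) * M h)) + 2 * (real K - 1) * ln (real K)"
    by (simp add: integral_add)
  also have "?E Ysum = 0" by (rule Ysum_mart)
  also have "?E (\<lambda>h. sqrt (ln (real K) * M h)) \<le> ?E (\<lambda>h. sqrt (ln (real K)) * (real K - 1) * eps * sqrt (maxN h))"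
  proof (intro integral_mono_AE integrable_traj, unfold AE_measure_pmf_iff, intro ballI)
    fix h assume "h \<in> set_pmf (soda_traj K l T)"
    hence v: "valid h" by (auto dest: traj_valid)
    have "ln (real K) * M h \<le> ln (real K) * ((real K - 1)\<^sup>2 * eps\<^sup>2 * maxN h)"
      using M_le_maxN[OF epsb v] lnK_pos by (intro mult_left_mono) auto
    hence "sqrt (ln (real K) * M h) \<le> sqrt (ln (real K) * ((real K - 1)\<^sup>2 * eps\<^sup>2 * maxN h))" by simp
    also have "\<dots> = sqrt (ln (real K)) * (real K - 1) * eps * sqrt (maxN h)"
      using K_real eps0 by (simp add: real_sqrt_mult)
    finally show "sqrt (ln (real K) * M h) \<le> sqrt (ln (real K)) * (real K - 1) * eps * sqrt (maxN h)" .
  qed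
  also have "?E (\<lambda>h. sqrt (ln (real K)) * (real K - 1) * eps * sqrt (maxN h)) = sqrt (ln (real K)) * (real K - 1) * eps * ?E (\<lambda>h. sqrt (maxN h))"
    by (rule integral_mult_right_zero)
  also have "?E (\<lambda>h. sqrt (maxN h)) \<le> sqrt y"
  proof -
    have "?E (\<lambda>h. sqrt (maxN h)) \<le> ?E (\<lambda>h. (maxN h + y) / (2 * sqrt y))"
      by (rule integral_mono[OF integrable_traj integrable_traj]) (rule sqrt_tangent[OF maxN_nonneg y0])
    also have "\<dots> = (?E maxN + y) / (2 * sqrt y)"
      by (simp add: integral_add add_divide_distrib)
    also have "\<dots> \<le> (y + y) / (2 * sqrt y)"
      using EmaxN_bound[OF T] y0 unfolding y_def by (intro divide_right_mono add_right_mono) auto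
    also have "\<dots> = sqrt y" using y0 by (simp add: field_simps)
    finally show ?thesis .
  qed
  finally have main: "soda_regret K l T \<le> 3 * (sqrt (ln (real K)) * (real K - 1) * eps * sqrt y) + 2 * (real K - 1) * ln (real K)"
    unfolding reg using lnK_pos K_real eps0 by (simp add: mult_left_mono)
  have Z: "sqrt ((real K - 1) * ln (real K)) * sqrt ((real K - 1) * y) = (real K - 1) * (sqrt (ln (real K)) * sqrt y)"
    using K_real y0 lnK_pos by (simp add: real_sqrt_mult)
  have Z0: "sqrt (ln (real K)) * (real K - 1) * eps * sqrt y \<ge> 0" using K_real eps0 y0 lnK_pos by simp
  have "3 * (sqrt (ln (real K)) * (real K - 1) * eps * sqrt y) \<le> 4 * eps * sqrt ((real K - 1) * ln (real K)) * sqrt ((real K - 1) * y)"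
  proof -
    have eq: "4 * eps * sqrt ((real K - 1) * ln (real K)) * sqrt ((real K - 1) * y) = 4 * (sqrt (ln (real K)) * (real K - 1) * eps * sqrt y)"
      unfolding mult.assoc Z by (simp add: ac_simps)
    show ?thesis unfolding eq using Z0 by linarith
  qed
  moreover have "2 * (real K - 1) * ln (real K) \<le> 4 * (real K - 1) * ln (real K)" using K_real lnK_pos by simp
  ultimately show ?thesis using main unfolding Qy by linarith
qed

end

theorem theorem1:
  fixes K T :: nat and l :: "nat \<Rightarrow> nat \<Rightarrow> real" and eps :: real
  assumes "K \<ge> 2"
    and "\<forall>t\<ge>1. \<forall>a\<in>{1..K}. 0 \<le> l t a \<and> l t a \<le> 1"
    and "effective_range K l eps"
    and "T \<ge> 1"
  shows "soda_regret K l T \<le>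
    4 * eps * sqrt ((real K - 1) * ln (real K)) *
      sqrt (real T + (real K - 1) * sqrt (real T) *
        (2 + sqrt (ln (sqrt (real T) * (real K - 1)) / 2)))
    + 4 * (real K - 1) * ln (real K)"
proof -
  interpret soda K l using assms(1,2) by unfold_locales
  have epsb: "\<forall>t\<ge>1. \<forall>a\<in>{1..K}. \<forall>a'\<in>{1..K}. \<bar>l t a - l t a'\<bar> \<le> eps"
    using assms(3) unfolding effective_range_def by blast
  have "\<bar>l 1 1 - l 1 1\<bar> \<le> eps" using epsb[rule_format, of 1 1 1] assms(1) by simp
  hence eps0: "eps \<ge> 0" by simp
  show ?thesis by (rule final_bound[OF epsb eps0 assms(4)])
qed


end
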